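(* Let $q$ be a prime number, let $l\ge 2$ be an integer and let $N=q^{l}$. Then $$\mathbb{Z}\text{-}\mathcal{KS}(N)=\{\,q+d,\ q-d\;:\; d \text{ a positive integer with } d\mid (q^{l}-q)\}\setminus\{0,N\}.$$
   Context: Every nonzero rational $\alpha$ is written $\alpha=\alpha_1/\alpha_2$ with $\alpha_1\in\mathbb{Z}$, $\alpha_2$ a positive integer and $\gcd(\alpha_1,\alpha_2)=1$ (for $\alpha\in\mathbb{Z}$ this means $\alpha_2=1$). For an integer $N\ge 2$ and a nonzero rational $\alpha=\alpha_1/\alpha_2$, $N$ is called an $\alpha$-Korselt number if $N\neq\alpha$ and $\alpha_2p-\alpha_1$ divides $\alpha_2N-\alpha_1$ (in $\mathbb{Z}$) for every prime divisor $p$ of $N$. For a subset $\mathbb{A}\subseteq\mathbb{Q}$, the Korselt set $\mathbb{A}\text{-}\mathcal{KS}(N)$ is the set of all $\beta\in\mathbb{A}\setminus\{0,N\}$ such that $N$ is a $\beta$-Korselt number. *)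

theory Defs
  imports Complex_Main "HOL-Computational_Algebra.Primes"
begin

text \<open>A nonzero rational alpha is written alpha1/alpha2 in lowest terms with alpha2 > 0;
  this is exactly quotient_of alpha.\<close>
definition alpha_korselt :: "nat \<Rightarrow> rat \<Rightarrow> bool" where
  "alpha_korselt N \<alpha> \<longleftrightarrow> N \<ge> 2 \<and> \<alpha> \<noteq> 0 \<and> \<alpha> \<noteq> of_nat N \<and>
     (\<forall>p::nat. prime p \<and> p dvd N \<longrightarrow>
        (case quotient_of \<alpha> of (a1, a2) \<Rightarrow> (a2 * int p - a1) dvd (a2 * int N - a1)))"

definition korselt_set :: "rat set \<Rightarrow> nat \<Rightarrow> rat set" where
  "korselt_set A N = {\<beta> \<in> A - {0, of_nat N}. alpha_korselt N \<beta>}"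

end

theory Submission
  imports Defs
begin

lemma key:
  fixes q l :: nat and b :: int
  assumes "prime q" and "l \<ge> 2"
  shows "alpha_korselt (q ^ l) (of_int b) \<longleftrightarrow>
     b \<noteq> 0 \<and> b \<noteq> int (q ^ l) \<and> (int q - b) dvd (int q ^ l - int q)"
proof -
  have q2: "q \<ge> 2" using assms(1) prime_ge_2_nat by blast
  have "q ^ l \<ge> q ^ 1" using q2 assms(2) by (intro power_increasing) auto
  hence N2: "q ^ l \<ge> 2" using q2 by simp
  have pd: "prime p \<and> p dvd q ^ l \<longleftrightarrow> p = q" for p :: nat
  proof
    assume "prime p \<and> p dvd q ^ l"
    hence "p dvd q" using prime_dvd_power by blast
    thus "p = q" using \<open>prime p \<and> p dvd q ^ l\<close> assms(1) primes_dvd_imp_eq by blast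
  next
    assume "p = q"
    thus "prime p \<and> p dvd q ^ l" using assms by (simp add: dvd_power)
  qed
  have eq: "(int q - b) dvd (int (q ^ l) - b) \<longleftrightarrow> (int q - b) dvd (int q ^ l - int q)"
  proof -
    have "int (q ^ l) - b = (int q ^ l - int q) + (int q - b)" by simp
    thus ?thesis by (metis dvd_add_left_iff dvd_refl)
  qed
  have ne: "(of_int b :: rat) \<noteq> of_nat (q ^ l) \<longleftrightarrow> b \<noteq> int (q ^ l)"
    by (metis of_int_eq_iff of_int_of_nat_eq)
  show ?thesis
  proof -
    have qo: "quotient_of (of_int b :: rat) = (b, 1)" by simp
    have "(\<forall>p::nat. prime p \<and> p dvd q ^ l \<longrightarrow>
        (case quotient_of (of_int b :: rat) of (a1, a2) \<Rightarrow> (a2 * int p - a1) dvd (a2 * int (q ^ l) - a1)))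
        \<longleftrightarrow> (int q - b) dvd (int (q ^ l) - b)"
      unfolding qo using pd by auto
    thus ?thesis unfolding alpha_korselt_def using N2 eq ne by auto
  qed
qed

theorem theorem3p2:
  fixes q l :: nat
  assumes "prime q" and "l \<ge> 2"
  shows "korselt_set \<int> (q ^ l) =
    ({of_int (int q + d) | d :: int. d > 0 \<and> d dvd (int q ^ l - int q)} \<union>
     {of_int (int q - d) | d :: int. d > 0 \<and> d dvd (int q ^ l - int q)}) - {0, of_nat (q ^ l)}"
proof -
  have q2: "q \<ge> 2" using assms(1) prime_ge_2_nat by blast
  have "q ^ l > q ^ 1" using q2 assms(2) by (intro power_strict_increasing) auto
  hence "int q < int q ^ l" by (metis of_nat_less_iff of_nat_power power_one_right)
  hence nq: "int q ^ l - int q \<noteq> 0" by simp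
  have ne: "(of_int b :: rat) = of_nat (q ^ l) \<longleftrightarrow> b = int (q ^ l)" for b
    by (metis of_int_eq_iff of_int_of_nat_eq)
  show ?thesis
  proof (rule set_eqI)
    fix x :: rat
    show "x \<in> korselt_set \<int> (q ^ l) \<longleftrightarrow> x \<in> ({of_int (int q + d) | d :: int. d > 0 \<and> d dvd (int q ^ l - int q)} \<union>
     {of_int (int q - d) | d :: int. d > 0 \<and> d dvd (int q ^ l - int q)}) - {0, of_nat (q ^ l)}"
    proof
      assume "x \<in> korselt_set \<int> (q ^ l)"
      then obtain b where xb: "x = of_int b" and k: "alpha_korselt (q ^ l) (of_int b)"
        unfolding korselt_set_def by (metis (no_types, lifting) DiffD1 Ints_cases mem_Collect_eq)
      hence h: "b \<noteq> 0" "b \<noteq> int (q ^ l)" "(int q - b) dvd (int q ^ l - int q)"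
        using key[OF assms] by auto
      have bq: "b \<noteq> int q" using h(3) nq by auto
      show "x \<in> ({of_int (int q + d) | d :: int. d > 0 \<and> d dvd (int q ^ l - int q)} \<union>
     {of_int (int q - d) | d :: int. d > 0 \<and> d dvd (int q ^ l - int q)}) - {0, of_nat (q ^ l)}"
      proof (cases "b < int q")
        case True
        have m: "x \<in> {of_int (int q - d) | d :: int. d > 0 \<and> d dvd (int q ^ l - int q)}"
          unfolding mem_Collect_eq by (rule exI[of _ "int q - b"]) (use xb h True in simp)
        have "x \<notin> {0, of_nat (q ^ l)}" using xb h ne by simp
        thus ?thesis using m by blast
      next
        case False
        have d2: "(b - int q) dvd (int q ^ l - int q)" proof - have "b - int q = - (int q - b)" by simp thus ?thesis using h(3) by (simp only: minus_dvd_iff) qed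
        have m: "x \<in> {of_int (int q + d) | d :: int. d > 0 \<and> d dvd (int q ^ l - int q)}"
          unfolding mem_Collect_eq by (rule exI[of _ "b - int q"]) (use xb d2 bq False in simp)
        have "x \<notin> {0, of_nat (q ^ l)}" using xb h ne by simp
        thus ?thesis using m by blast
      qed
    next
      assume a: "x \<in> ({of_int (int q + d) | d :: int. d > 0 \<and> d dvd (int q ^ l - int q)} \<union>
     {of_int (int q - d) | d :: int. d > 0 \<and> d dvd (int q ^ l - int q)}) - {0, of_nat (q ^ l)}"
      have "\<exists>b. x = of_int b \<and> (int q - b) dvd (int q ^ l - int q)"
      proof -
        from a obtain d where "d dvd (int q ^ l - int q)" and hx:
          "x = of_int (int q + d) \<or> x = of_int (int q - d)" by blast
        from hx show ?thesis
        proof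
          assume "x = of_int (int q + d)" 
          moreover have "(int q - (int q + d)) dvd (int q ^ l - int q)" using \<open>d dvd _\<close> by simp
          ultimately show ?thesis by blast
        next
          assume "x = of_int (int q - d)" 
          moreover have "(int q - (int q - d)) dvd (int q ^ l - int q)" using \<open>d dvd _\<close> by simp
          ultimately show ?thesis by blast
        qed
      qed
      then obtain b where xb: "x = of_int b" and dv: "(int q - b) dvd (int q ^ l - int q)"
        by blast
      have "b \<noteq> 0" "b \<noteq> int (q ^ l)" using a xb ne by auto
      hence "alpha_korselt (q ^ l) (of_int b)" using key[OF assms] dv by auto
      thus "x \<in> korselt_set \<int> (q ^ l)" using a xb unfolding korselt_set_def by auto
    qed
  qed
qed

end
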